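(* For every positive integer $n$, \[ \mathcal{A}_n(u,v;x_1,\ldots,x_n)=\frac{\det_{1\le i,j\le n}\big(x_i^{\,n-j}p_j(x_i)\big)}{\prod_{1\le i<j\le n}(x_i-x_j)},\qquad p_j(x)=\sum_{k=0}^{j-1}x^k(-1+u+v-ux)^k v^{\,j-1-k}. \]
   Context: $\mathrm{ASym}_{x_1,\ldots,x_n} f=\sum_{\sigma\in S_n}\mathrm{sgn}(\sigma) f(x_{\sigma(1)},\ldots,x_{\sigma(n)})$, and \[ \mathcal{A}_n(u,v;x_1,\ldots,x_n)=\frac{\mathrm{ASym}_{x_1,\ldots,x_n}\Big[\prod_{i=1}^n x_i^{i-1}\prod_{1\le i<j\le n}\big(v+(1-u-v)x_i+u x_i x_j\big)\Big]}{\prod_{1\le i<j\le n}(x_j-x_i)}. \] *)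

theory Defs
  imports "Jordan_Normal_Form.Determinant"
begin

definition ASym :: "nat \<Rightarrow> ((nat \<Rightarrow> 'a) \<Rightarrow> 'a) \<Rightarrow> (nat \<Rightarrow> 'a) \<Rightarrow> 'a::comm_ring_1" where
  "ASym n f x = (\<Sum>\<sigma> | \<sigma> permutes {1..n}. of_int (sign \<sigma>) * f (\<lambda>i. x (\<sigma> i)))"

definition calA :: "nat \<Rightarrow> 'a \<Rightarrow> 'a \<Rightarrow> (nat \<Rightarrow> 'a) \<Rightarrow> 'a::field" where
  "calA n u v x =
     ASym n (\<lambda>y. (\<Prod>i=1..n. y i ^ (i - 1)) *
                  (\<Prod>i=1..n. \<Prod>j=i+1..n. v + (1 - u - v) * y i + u * y i * y j)) x
     / (\<Prod>i=1..n. \<Prod>j=i+1..n. (x j - x i))"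

definition pj :: "'a \<Rightarrow> 'a \<Rightarrow> nat \<Rightarrow> 'a \<Rightarrow> 'a::comm_ring_1" where
  "pj u v j t = (\<Sum>k=0..j-1. t ^ k * (-1 + u + v - u * t) ^ k * v ^ (j - 1 - k))"

end

theory Submission
  imports Defs
begin
definition pp :: "'a::comm_ring_1 \<Rightarrow> nat \<Rightarrow> 'a \<Rightarrow> 'a" where
  "pp v m a = (\<Sum>k<m. a^k * v^(m-1-k))"

lemma pp_Suc: "pp v (Suc m) a = v * pp v m a + a^m"
proof -
  have "pp v (Suc m) a = (\<Sum>k<m. a^k * v^(m-k)) + a^m"
    unfolding pp_def by simp
  also have "(\<Sum>k<m. a^k * v^(m-k)) = v * pp v m a"
    unfolding pp_def sum_distrib_left
  proof (rule sum.cong)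
    fix x assume "x \<in> {..<m}"
    then have "m - x = Suc (m - Suc x)" by auto
    then show "a^x * v^(m-x) = v * (a^x * v^(m-1-x))" by (simp add: mult.left_commute)
  qed simp
  finally show ?thesis .
qed

lemma pp_0[simp]: "pp v 0 a = 0" by (simp add: pp_def)

lemma core_alg:
  fixes b :: "nat \<Rightarrow> 'a::comm_ring_1"
  shows "(\<Sum>k\<le>n. b k * a^k * t^(n-k)) =
     b n * pp v (Suc n) a - (\<Sum>s\<in>{1..n}. (v * b s - t * b (s-1)) * t^(n-s) * pp v s a)"
proof (induction n)
  case 0
  then show ?case by (simp add: pp_def)
next
  case (Suc n)
  have "(\<Sum>k\<le>Suc n. b k * a^k * t^(Suc n-k)) = t * (\<Sum>k\<le>n. b k * a^k * t^(n-k)) + b (Suc n) * a^(Suc n)"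
    by (simp add: sum_distrib_left Suc_diff_le mult.left_commute)
  also have "\<dots> = t * (b n * pp v (Suc n) a - (\<Sum>s\<in>{1..n}. (v * b s - t * b (s-1)) * t^(n-s) * pp v s a)) + b (Suc n) * a^(Suc n)"
    using Suc by simp
  also have "(\<Sum>s\<in>{1..Suc n}. (v * b s - t * b (s-1)) * t^(Suc n-s) * pp v s a)
     = t * (\<Sum>s\<in>{1..n}. (v * b s - t * b (s-1)) * t^(n-s) * pp v s a) + (v * b (Suc n) - t * b n) * pp v (Suc n) a"
    by (simp add: sum_distrib_left Suc_diff_le mult.left_commute mult.assoc)
  ultimately show ?case
    by (simp add: pp_Suc[of v "Suc n"] algebra_simps)
qed


definition PL :: "'a::comm_ring_1 \<Rightarrow> (nat \<Rightarrow> 'a) \<Rightarrow> nat \<Rightarrow> 'a poly" where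
  "PL v y m = (\<Prod>l<m. [:v, - y l:])"

lemma coeff_lin_mult_Suc: "coeff ([:c, d:] * q) (Suc s) = c * coeff q (Suc s) + d * coeff q s"
  by (simp add: mult_pCons_left coeff_pCons)
lemma coeff_lin_mult_0: "coeff ([:c, d:] * q) 0 = c * coeff q 0"
  by (simp add: mult_pCons_left)

lemma PL_Suc: "PL v y (Suc m) = [:v, - y m:] * PL v y m"
  by (simp add: PL_def mult.commute)

lemma PL_deg: "k > m \<Longrightarrow> coeff (PL v y m) k = 0"
proof (induction m arbitrary: k)
  case 0 then show ?case by (simp add: PL_def coeff_1 split: if_splits)
next
  case (Suc m)
  then obtain k' where k: "k = Suc k'" by (cases k) auto
  show ?case using Suc by (simp add: PL_Suc k coeff_lin_mult_Suc)
qed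

lemma PL_lead: "coeff (PL v y m) m = (\<Prod>l<m. - y l)"
proof (induction m)
  case 0 then show ?case by (simp add: PL_def)
next
  case (Suc m)
  show ?case using Suc by (simp add: PL_Suc coeff_lin_mult_Suc PL_deg mult.commute)
qed

lemma PL_eval:
  "(\<Prod>l<m. v * t - a * y l) = (\<Sum>k\<le>m. coeff (PL v y m) k * a^k * t^(m-k))"
proof (induction m)
  case 0 then show ?case by (simp add: PL_def)
next
  case (Suc m)
  let ?q = "coeff (PL v y m)"
  have "(\<Prod>l<Suc m. v * t - a * y l) = (\<Sum>k\<le>m. ?q k * a^k * t^(m-k)) * (v * t - a * y m)"
    using Suc by simp
  also have "\<dots> = (\<Sum>k\<le>m. v * ?q k * a^k * t^(Suc m-k)) - (\<Sum>k\<le>m. y m * ?q k * a^(Suc k) * t^(m-k))"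
    unfolding sum_distrib_right right_diff_distrib sum_subtractf[symmetric]
    by (rule sum.cong) (auto simp: Suc_diff_le algebra_simps)
  also have "(\<Sum>k\<le>m. y m * ?q k * a^(Suc k) * t^(m-k)) = (\<Sum>k\<le>Suc m. (if k = 0 then 0 else y m * ?q (k-1)) * a^k * t^(Suc m-k))"
    unfolding sum.atMost_Suc_shift by simp
  also have "(\<Sum>k\<le>m. v * ?q k * a^k * t^(Suc m-k)) = (\<Sum>k\<le>Suc m. v * ?q k * a^k * t^(Suc m-k))"
    by (simp add: PL_deg)
  also have "(\<Sum>k\<le>Suc m. v * ?q k * a^k * t^(Suc m-k)) - (\<Sum>k\<le>Suc m. (if k = 0 then 0 else y m * ?q (k-1)) * a^k * t^(Suc m-k))
     = (\<Sum>k\<le>Suc m. coeff (PL v y (Suc m)) k * a^k * t^(Suc m-k))"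
    unfolding sum_subtractf[symmetric]
  proof (rule sum.cong)
    fix k show "v * ?q k * a^k * t^(Suc m-k) - (if k = 0 then 0 else y m * ?q (k-1)) * a^k * t^(Suc m-k)
       = coeff (PL v y (Suc m)) k * a^k * t^(Suc m-k)"
      by (cases k) (simp_all add: PL_Suc coeff_lin_mult_Suc coeff_lin_mult_0 algebra_simps)
  qed simp
  finally show ?case .
qed


lemma prod_neg_lessThan: "(\<Prod>l<m. - (f l::'a::comm_ring_1)) = (-1)^m * (\<Prod>l<m. f l)"
  by (induction m) auto

lemma PL_split:
  assumes k: "k < Suc n"
  shows "PL v X (Suc n) = [:v, - X k:] * PL v (\<lambda>l. X (insert_index k l)) n"
proof -
  have "PL v X (Suc n) = (\<Prod>l\<in>insert k ({0..<Suc n} - {k}). [:v, - X l:])"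
    unfolding PL_def using k by (intro prod.cong) auto
  also have "\<dots> = [:v, - X k:] * (\<Prod>l\<in>{0..<Suc n} - {k}. [:v, - X l:])"
    by (rule prod.insert) auto
  also have "{0..<Suc n} - {k} = insert_index k ` {0..<n}"
    using insert_index_image[OF k] by simp
  also have "(\<Prod>l\<in>insert_index k ` {0..<n}. [:v, - X l:]) = (\<Prod>l\<in>{0..<n}. [:v, - X (insert_index k l):])"
    by (subst prod.reindex) (auto simp: inj_on_def insert_index_def split: if_splits)
  finally show ?thesis unfolding PL_def by (simp add: atLeast0LessThan)
qed

lemma E_ident:
  assumes k: "k < Suc n"
  shows "(-1)^n * (\<Prod>l<n. v * X k - A k * X (insert_index k l)) =
   (\<Prod>l<n. X (insert_index k l)) * pp v (Suc n) (A k)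
   - (-1)^n * (\<Sum>s\<in>{1..n}. coeff (PL v X (Suc n)) s * (X k ^ (n-s) * pp v s (A k)))"
proof -
  define b where "b = coeff (PL v (\<lambda>l. X (insert_index k l)) n)"
  have C: "coeff (PL v X (Suc n)) s = v * b s - X k * b (s-1)" if "s \<in> {1..n}" for s
  proof -
    from that obtain s' where s: "s = Suc s'" by (cases s) auto
    show ?thesis unfolding PL_split[OF k] s b_def coeff_lin_mult_Suc by simp
  qed
  have "(\<Prod>l<n. v * X k - A k * X (insert_index k l)) = (\<Sum>s\<le>n. b s * (A k)^s * (X k)^(n-s))"
    unfolding b_def by (rule PL_eval)
  also have "\<dots> = b n * pp v (Suc n) (A k) - (\<Sum>s\<in>{1..n}. (v * b s - X k * b (s-1)) * (X k)^(n-s) * pp v s (A k))"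
    by (rule core_alg)
  also have "(\<Sum>s\<in>{1..n}. (v * b s - X k * b (s-1)) * (X k)^(n-s) * pp v s (A k)) =
     (\<Sum>s\<in>{1..n}. coeff (PL v X (Suc n)) s * (X k ^ (n-s) * pp v s (A k)))"
    by (rule sum.cong) (auto simp: C mult.assoc)
  also have "b n = (-1)^n * (\<Prod>l<n. X (insert_index k l))"
    unfolding b_def PL_lead prod_neg_lessThan ..
  finally have "(\<Prod>l<n. v * X k - A k * X (insert_index k l)) = (-1)^n * (\<Prod>l<n. X (insert_index k l)) * pp v (Suc n) (A k) -
      (\<Sum>s\<in>{1..n}. coeff (PL v X (Suc n)) s * (X k ^ (n-s) * pp v s (A k)))" .
  moreover have "(-1)^n * (-1)^n = (1::'a)" by (simp add: power_mult_distrib[symmetric])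
  moreover have gen: "\<And>s E S Q::'a. E = s*Q - S \<Longrightarrow> s*s = 1 \<Longrightarrow> s*E = Q - s*S"
    by (simp add: right_diff_distrib mult.assoc[symmetric])
  ultimately show ?thesis by (metis (no_types, lifting) mult.assoc)
qed


definition RM :: "'a::comm_ring_1 \<Rightarrow> nat \<Rightarrow> (nat \<Rightarrow> 'a) \<Rightarrow> (nat \<Rightarrow> 'a) \<Rightarrow> 'a mat" where
  "RM v n X A = mat n n (\<lambda>(i,j). X i ^ j * pp v (n - j) (A i))"

lemma det_rowscale:
  "det (mat n n (\<lambda>(i,j). f i * g i j)) = (\<Prod>i<n. f i) * det (mat n n (\<lambda>(i,j). g i j :: 'a::comm_ring_1))"
proof -
  have "det (mat n n (\<lambda>(i,j). f i * g i j)) = (\<Sum>p\<in>{p. p permutes {0..<n}}. signof p * (\<Prod>i=0..<n. f i * g i (p i)))"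
    by (subst det_def') (auto intro!: sum.cong prod.cong)
  also have "\<dots> = (\<Sum>p\<in>{p. p permutes {0..<n}}. (\<Prod>i<n. f i) * (signof p * (\<Prod>i=0..<n. g i (p i))))"
    by (rule sum.cong) (auto simp: prod.distrib atLeast0LessThan)
  also have "\<dots> = (\<Prod>i<n. f i) * det (mat n n (\<lambda>(i,j). g i j))"
    by (subst det_def'[of _ n]) (auto simp: sum_distrib_left intro!: sum.cong prod.cong)
  finally show ?thesis .
qed

lemma det_DM:
  "det (mat (Suc n) (Suc n) (\<lambda>(i,j). if j = n then c i else X i ^ j * pp v (n-j) (A i))) =
   (\<Sum>i<Suc n. c i * ((-1)^(i+n) * det (RM v n (\<lambda>l. X (insert_index i l)) (\<lambda>l. A (insert_index i l)))))"
  (is "det ?M = _")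
proof -
  have "det ?M = (\<Sum>i<Suc n. ?M $$ (i,n) * cofactor ?M i n)"
    by (rule laplace_expansion_column) auto
  also have "\<dots> = (\<Sum>i<Suc n. c i * ((-1)^(i+n) * det (RM v n (\<lambda>l. X (insert_index i l)) (\<lambda>l. A (insert_index i l)))))"
  proof (rule sum.cong[OF refl])
    fix i assume i: "i \<in> {..<Suc n}"
    have "mat_delete ?M i n = RM v n (\<lambda>l. X (insert_index i l)) (\<lambda>l. A (insert_index i l))"
      unfolding RM_def mat_delete_def
      by (rule eq_matI) (auto simp: insert_index_def)
    then show "?M $$ (i,n) * cofactor ?M i n = c i * ((-1)^(i+n) * det (RM v n (\<lambda>l. X (insert_index i l)) (\<lambda>l. A (insert_index i l))))"
      using i unfolding cofactor_def by simp
  qed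
  finally show ?thesis .
qed

lemma det_RM_Suc:
  "det (RM v (Suc n) X A) =
   (\<Sum>i<Suc n. pp v (Suc n) (A i) * ((-1)^i * ((\<Prod>l<n. X (insert_index i l)) *
       det (RM v n (\<lambda>l. X (insert_index i l)) (\<lambda>l. A (insert_index i l))))))"
proof -
  have "det (RM v (Suc n) X A) = (\<Sum>i<Suc n. RM v (Suc n) X A $$ (i,0) * cofactor (RM v (Suc n) X A) i 0)"
    by (rule laplace_expansion_column) (auto simp: RM_def)
  also have "\<dots> = (\<Sum>i<Suc n. pp v (Suc n) (A i) * ((-1)^i * ((\<Prod>l<n. X (insert_index i l)) *
       det (RM v n (\<lambda>l. X (insert_index i l)) (\<lambda>l. A (insert_index i l))))))"
  proof (rule sum.cong[OF refl])
    fix i assume i: "i \<in> {..<Suc n}"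
    have "mat_delete (RM v (Suc n) X A) i 0 = mat n n (\<lambda>(i',j'). X (insert_index i i') *
       ((\<lambda>i' j'. X (insert_index i i') ^ j' * pp v (n - j') (A (insert_index i i'))) i' j'))"
      unfolding RM_def mat_delete_def
      by (rule eq_matI) (auto simp: insert_index_def)
    then have "det (mat_delete (RM v (Suc n) X A) i 0) = (\<Prod>l<n. X (insert_index i l)) *
       det (RM v n (\<lambda>l. X (insert_index i l)) (\<lambda>l. A (insert_index i l)))"
      unfolding RM_def using det_rowscale[of n "\<lambda>i'. X (insert_index i i')" "\<lambda>i' j'. X (insert_index i i') ^ j' * pp v (n - j') (A (insert_index i i'))"]
      by simp
    then show "RM v (Suc n) X A $$ (i,0) * cofactor (RM v (Suc n) X A) i 0 = pp v (Suc n) (A i) * ((-1)^i * ((\<Prod>l<n. X (insert_index i l)) *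
       det (RM v n (\<lambda>l. X (insert_index i l)) (\<lambda>l. A (insert_index i l)))))"
      using i unfolding cofactor_def by (simp add: RM_def)
  qed
  finally show ?thesis .
qed

lemma det_DM_zero:
  assumes j: "j < n"
  shows "(\<Sum>i<Suc n. (X i ^ j * pp v (n-j) (A i)) * ((-1)^(i+n) * det (RM v n (\<lambda>l. X (insert_index i l)) (\<lambda>l. A (insert_index i l))))) = 0"
proof -
  let ?M = "mat (Suc n) (Suc n) (\<lambda>(i,j'). if j' = n then X i ^ j * pp v (n-j) (A i) else X i ^ j' * pp v (n-j') (A i))"
  have "det ?M = 0"
    by (rule det_identical_columns[of _ "Suc n" j n]) (use j in \<open>auto intro!: eq_vecI\<close>)
  then show ?thesis unfolding det_DM .
qed


definition LLg :: "nat \<Rightarrow> (nat \<Rightarrow> nat \<Rightarrow> 'a::comm_ring_1) \<Rightarrow> 'a" where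
 "LLg n F = (\<Sum>\<sigma>\<in>{p. p permutes {0..<n}}. signof \<sigma> * (\<Prod>j<n. \<Prod>i<j. F (\<sigma> i) (\<sigma> j)))"

lemma perm_insert_lt: "i < n \<Longrightarrow> permutation_insert n k q i = insert_index k (q i)"
  unfolding permutation_insert_def insert_dom_def insert_ran_def by simp

lemma LLg_Suc: "LLg (Suc n) F = (\<Sum>k<Suc n. (-1)^(n+k) * (\<Prod>l<n. F (insert_index k l) k) *
    LLg n (\<lambda>a b. F (insert_index k a) (insert_index k b)))"
proof -
  define N where "N = {0..<Suc n}"
  define h where "h = (\<lambda>p. signof p * (\<Prod>j<Suc n. \<Prod>i<j. F (p i) (p j)) :: 'a)"
  define Q where "Q = {q. q permutes {0..<n}}"
  have "LLg (Suc n) F = sum h {p. p permutes N}"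
    unfolding LLg_def h_def N_def ..
  also have "{p. p permutes N} = (\<Union>k\<in>N. {p. p permutes N \<and> p n = k})"
    unfolding N_def using permutes_in_image by fastforce
  also have "sum h \<dots> = (\<Sum>k\<in>N. sum h {p. p permutes N \<and> p n = k})"
    by (rule sum.UNION_disjoint) (auto simp: N_def finite_permutations)
  also have "\<dots> = (\<Sum>k\<in>N. (-1)^(n+k) * (\<Prod>l<n. F (insert_index k l) k) *
    LLg n (\<lambda>a b. F (insert_index k a) (insert_index k b)))"
  proof (rule sum.cong[OF refl])
    fix k assume k: "k \<in> N"
    then have kn: "k < Suc n" by (simp add: N_def)
    have "sum h {p. p permutes N \<and> p n = k} = sum h (permutation_insert n k ` Q)"
      unfolding N_def Q_def using permutation_fix[of n n k] kn by simp
    also have "\<dots> = sum (h \<circ> permutation_insert n k) Q"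
      unfolding Q_def by (rule sum.reindex) (rule permutation_insert_inj_on; use kn in simp)
    also have "\<dots> = (\<Sum>q\<in>Q. (-1)^(n+k) * (\<Prod>l<n. F (insert_index k l) k) *
         (signof q * (\<Prod>j<n. \<Prod>i<j. F (insert_index k (q i)) (insert_index k (q j)))))"
    proof (rule sum.cong[OF refl])
      fix q assume "q \<in> Q"
      then have q: "q permutes {0..<n}" by (simp add: Q_def)
      let ?p = "permutation_insert n k q"
      have s: "signof ?p = (-1::'a)^(n+k) * signof q"
        by (rule signof_permutation_insert[OF q]) (use kn in auto)
      have pr1: "(\<Prod>j<Suc n. \<Prod>i<j. F (?p i) (?p j)) = (\<Prod>j<n. \<Prod>i<j. F (?p i) (?p j)) * (\<Prod>i<n. F (?p i) (?p n))"
        by simp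
      have pr2: "(\<Prod>j<n. \<Prod>i<j. F (?p i) (?p j)) = (\<Prod>j<n. \<Prod>i<j. F (insert_index k (q i)) (insert_index k (q j)))"
        by (intro prod.cong refl) (auto simp: perm_insert_lt)
      have "(\<Prod>i<n. F (?p i) (?p n)) = (\<Prod>i<n. F (insert_index k (q i)) k)"
        by (intro prod.cong refl) (auto simp: perm_insert_lt)
      also have "\<dots> = (\<Prod>i<n. F (insert_index k i) k)"
        using prod.permute[OF q, of "\<lambda>i. F (insert_index k i) k"] by (simp add: atLeast0LessThan o_def)
      finally have pr3: "(\<Prod>i<n. F (?p i) (?p n)) = (\<Prod>i<n. F (insert_index k i) k)" .
      show "(h \<circ> permutation_insert n k) q = (-1)^(n+k) * (\<Prod>l<n. F (insert_index k l) k) *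
         (signof q * (\<Prod>j<n. \<Prod>i<j. F (insert_index k (q i)) (insert_index k (q j))))"
        unfolding o_def h_def s pr1 pr2 pr3 by (simp add: ac_simps)
    qed
    also have "\<dots> = (-1)^(n+k) * (\<Prod>l<n. F (insert_index k l) k) *
    LLg n (\<lambda>a b. F (insert_index k a) (insert_index k b))"
      unfolding LLg_def Q_def sum_distrib_left ..
    finally show "sum h {p. p permutes N \<and> p n = k} = (-1)^(n+k) * (\<Prod>l<n. F (insert_index k l) k) *
    LLg n (\<lambda>a b. F (insert_index k a) (insert_index k b))" .
  qed
  finally show ?thesis unfolding N_def atLeast0LessThan .
qed


lemma main_LLg: "LLg n (\<lambda>a b. v * X b - A b * X a) = det (RM v n X A)"
proof (induction n arbitrary: X A)
  case 0
  have "{p. p permutes {0..<(0::nat)}} = {id}" by (auto simp: permutes_empty)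
  then show ?case by (simp add: LLg_def RM_def det_def)
next
  case (Suc n)
  define R where "R = (\<lambda>k. det (RM v n (\<lambda>l. X (insert_index k l)) (\<lambda>l. A (insert_index k l))))"
  define P where "P = (\<lambda>k. \<Prod>l<n. X (insert_index k l))"
  define E where "E = (\<lambda>k. \<Prod>l<n. v * X k - A k * X (insert_index k l))"
  define C where "C = coeff (PL v X (Suc n))"
  define c where "c = (\<lambda>s k. X k ^ (n-s) * pp v s (A k))"
  have "LLg (Suc n) (\<lambda>a b. v * X b - A b * X a) = (\<Sum>k<Suc n. (-1)^(n+k) * E k * R k)"
    unfolding LLg_Suc E_def R_def using Suc.IH by simp
  also have "\<dots> = (\<Sum>k<Suc n. pp v (Suc n) (A k) * ((-1)^k * (P k * R k)) -
         (\<Sum>s\<in>{1..n}. C s * (c s k * ((-1)^(k+n) * R k))))"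
  proof (rule sum.cong[OF refl])
    fix k assume "k \<in> {..<Suc n}"
    then have k: "k < Suc n" by simp
    have e: "(-1)^n * E k = P k * pp v (Suc n) (A k) - (-1)^n * (\<Sum>s\<in>{1..n}. C s * c s k)"
      unfolding E_def P_def C_def c_def by (rule E_ident[OF k])
    have "(-1)^(n+k) * E k * R k = (-1)^k * ((-1)^n * E k) * R k"
      by (simp add: power_add ac_simps)
    also have "\<dots> = pp v (Suc n) (A k) * ((-1)^k * (P k * R k)) -
         (\<Sum>s\<in>{1..n}. C s * (c s k * ((-1)^(k+n) * R k)))"
      unfolding e by (simp add: algebra_simps sum_distrib_left sum_distrib_right power_add)
    finally show "(-1)^(n+k) * E k * R k = pp v (Suc n) (A k) * ((-1)^k * (P k * R k)) -
         (\<Sum>s\<in>{1..n}. C s * (c s k * ((-1)^(k+n) * R k)))" .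
  qed
  also have "\<dots> = det (RM v (Suc n) X A) - (\<Sum>s\<in>{1..n}. C s * (\<Sum>k<Suc n. c s k * ((-1)^(k+n) * R k)))"
  proof -
    have 1: "(\<Sum>k<Suc n. pp v (Suc n) (A k) * ((-1)^k * (P k * R k))) = det (RM v (Suc n) X A)"
      unfolding det_RM_Suc P_def R_def ..
    have 2: "(\<Sum>k<Suc n. \<Sum>s\<in>{1..n}. C s * (c s k * ((-1)^(k+n) * R k))) =
       (\<Sum>s\<in>{1..n}. C s * (\<Sum>k<Suc n. c s k * ((-1)^(k+n) * R k)))"
      unfolding sum_distrib_left by (rule sum.swap)
    show ?thesis unfolding sum_subtractf 1 2 ..
  qed
  also have "(\<Sum>s\<in>{1..n}. C s * (\<Sum>k<Suc n. c s k * ((-1)^(k+n) * R k))) = 0"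
  proof (rule sum.neutral, rule ballI)
    fix s assume s: "s \<in> {1..n}"
    have "(\<Sum>k<Suc n. c s k * ((-1)^(k+n) * R k)) =
      (\<Sum>i<Suc n. (X i ^ (n-s) * pp v (n-(n-s)) (A i)) * ((-1)^(i+n) * det (RM v n (\<lambda>l. X (insert_index i l)) (\<lambda>l. A (insert_index i l)))))"
      using s by (simp add: c_def R_def)
    also have "\<dots> = 0" by (rule det_DM_zero) (use s in auto)
    finally show "C s * (\<Sum>k<Suc n. c s k * ((-1)^(k+n) * R k)) = 0" by simp
  qed
  finally show ?case by simp
qed


lemma tri:
  fixes g :: "nat \<Rightarrow> nat \<Rightarrow> 'a::comm_monoid_mult"
  shows "(\<Prod>i=1..n. \<Prod>j=i+1..n. g i j) = (\<Prod>j<n. \<Prod>i<j. g (Suc i) (Suc j))"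
proof (induction n)
  case 0 then show ?case by simp
next
  case (Suc n)
  have "(\<Prod>i=1..Suc n. \<Prod>j=i+1..Suc n. g i j) = (\<Prod>i=1..n. (\<Prod>j=i+1..n. g i j) * g i (Suc n))"
    by (auto intro!: prod.cong)
  also have "\<dots> = (\<Prod>i=1..n. \<Prod>j=i+1..n. g i j) * (\<Prod>i=1..n. g i (Suc n))"
    by (rule prod.distrib)
  also have "(\<Prod>i=1..n. g i (Suc n)) = (\<Prod>i<n. g (Suc i) (Suc n))"
    using prod.atLeast1_atMost_eq[of "\<lambda>i. g i (Suc n)" n] by simp
  finally show ?case using Suc by simp
qed

lemma pow_idx: "(\<Prod>i=1..n. (y i::'a::comm_monoid_mult) ^ (i-1)) = (\<Prod>j<n. y (Suc j) ^ j)"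
  using prod.atLeast1_atMost_eq[of "\<lambda>i. y i ^ (i-1)" n] by simp

lemma sgn_tri:
  fixes x :: "nat \<Rightarrow> 'a::comm_ring_1"
  shows "(\<Prod>i=1..n. \<Prod>j=i+1..n. (x i - x j)) = (-1)^(\<Sum>j<n. j) * (\<Prod>i=1..n. \<Prod>j=i+1..n. (x j - x i))"
  unfolding tri
proof (induction n)
  case 0 then show ?case by simp
next
  case (Suc n)
  have "(\<Prod>i<n. x (Suc i) - x (Suc n)) = (-1)^n * (\<Prod>i<n. x (Suc n) - x (Suc i))"
    using prod_neg_lessThan[of "\<lambda>i. x (Suc n) - x (Suc i)" n] by simp
  then show ?case using Suc by (simp add: power_add)
qed

definition revp :: "nat \<Rightarrow> nat \<Rightarrow> nat" where "revp n j = (if j < n then n - 1 - j else j)"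

lemma revp_permutes: "revp n permutes {0..<n}"
proof (rule bij_imp_permutes)
  show "bij_betw (revp n) {0..<n} {0..<n}"
  proof (rule bij_betw_byWitness[where f' = "revp n"])
    show "\<forall>a\<in>{0..<n}. revp n (revp n a) = a" by (auto simp: revp_def)
    show "\<forall>a\<in>{0..<n}. revp n (revp n a) = a" by (auto simp: revp_def)
    show "revp n ` {0..<n} \<subseteq> {0..<n}" by (auto simp: revp_def)
    show "revp n ` {0..<n} \<subseteq> {0..<n}" by (auto simp: revp_def)
  qed
qed (auto simp: revp_def)

lemma revp_Suc: "revp (Suc n) = permutation_insert n 0 (revp n)"
  by (rule ext) (auto simp: permutation_insert_def insert_dom_def insert_ran_def insert_index_def revp_def)

lemma sign_revp: "(signof (revp n) :: 'a::comm_ring_1) = (-1)^(\<Sum>j<n. j)"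
proof (induction n)
  case 0
  have "revp 0 = id" by (auto simp: revp_def)
  then show ?case by simp
next
  case (Suc n)
  have "(signof (revp (Suc n)) :: 'a) = (-1)^(n+0) * signof (revp n)"
    unfolding revp_Suc by (rule signof_permutation_insert[OF revp_permutes]) auto
  then show ?case using Suc by (simp add: power_add mult.commute)
qed

lemma det_permute_cols:
  assumes B: "B \<in> carrier_mat n n" and p: "p permutes {0..<n}"
  shows "det (mat n n (\<lambda>(i,j). B $$ (i, p j))) = signof p * det B"
proof -
  have "det (mat n n (\<lambda>(i,j). B $$ (i, p j))) = det (transpose_mat (mat n n (\<lambda>(i,j). B $$ (i, p j))))"
    by (rule det_transpose[symmetric]) auto
  also have "transpose_mat (mat n n (\<lambda>(i,j). B $$ (i, p j))) = mat n n (\<lambda>(i,j). transpose_mat B $$ (p i, j))"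
    using B p by (auto intro!: eq_matI simp: permutes_in_image[OF p])
  also have "det \<dots> = signof p * det (transpose_mat B)"
    by (rule det_permute_rows[OF _ p]) (use B in auto)
  also have "det (transpose_mat B) = det B" by (rule det_transpose[OF B])
  finally show ?thesis .
qed


lemma prod_combine:
  fixes Y :: "nat \<Rightarrow> 'a::comm_ring_1"
  shows "(\<Prod>j<n. Y j ^ j) * (\<Prod>j<n. \<Prod>i<j. W (Y i) (Y j)) = (\<Prod>j<n. \<Prod>i<j. Y j * W (Y i) (Y j))"
  by (simp add: prod.distrib)

lemma ASym_conv:
  fixes x :: "nat \<Rightarrow> 'a::field" and u v :: 'a
  shows "ASym n (\<lambda>y. (\<Prod>i=1..n. y i ^ (i - 1)) *
                  (\<Prod>i=1..n. \<Prod>j=i+1..n. v + (1 - u - v) * y i + u * y i * y j)) x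
     = LLg n (\<lambda>a b. v * x (Suc b) - (x (Suc b) * (-1 + u + v - u * x (Suc b))) * x (Suc a))"
proof -
  define \<Phi> where "\<Phi> = (\<lambda>\<tau>::nat\<Rightarrow>nat. \<lambda>y. if y \<in> {1..n} then Suc (\<tau> (inv_into {0..<n} Suc y)) else y)"
  have bS: "bij_betw Suc {0..<n} {1..n}"
    by (auto simp: bij_betw_def image_Suc_atLeastLessThan)
  have bij: "bij_betw \<Phi> {\<tau>. \<tau> permutes {0..<n}} {\<sigma>. \<sigma> permutes {1..n}}"
    unfolding \<Phi>_def by (rule bij_betw_permutations[OF bS])
  define f where "f = (\<lambda>y. (\<Prod>i=1..n. y i ^ (i - 1)) *
                  (\<Prod>i=1..n. \<Prod>j=i+1..n. v + (1 - u - v) * y i + u * y i * y j))"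
  define G where "G = (\<lambda>\<sigma>. of_int (sign \<sigma>) * f (\<lambda>i. x (\<sigma> i)))"
  have "ASym n f x = sum G {\<sigma>. \<sigma> permutes {1..n}}"
    unfolding ASym_def G_def ..
  also have "\<dots> = (\<Sum>\<tau>\<in>{\<tau>. \<tau> permutes {0..<n}}. G (\<Phi> \<tau>))"
    by (rule sum.reindex_bij_betw[symmetric, OF bij])
  also have "\<dots> = LLg n (\<lambda>a b. v * x (Suc b) - (x (Suc b) * (-1 + u + v - u * x (Suc b))) * x (Suc a))"
    unfolding LLg_def
  proof (rule sum.cong[OF refl])
    fix \<tau> assume "\<tau> \<in> {\<tau>. \<tau> permutes {0..<n}}"
    then have \<tau>: "\<tau> permutes {0..<n}" by simp
    have phi: "\<Phi> \<tau> (Suc k) = Suc (\<tau> k)" if "k < n" for k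
    proof -
      have "inv_into {0..<n} Suc (Suc k) = k" using that by (intro inv_into_f_eq) auto
      then show ?thesis using that by (simp add: \<Phi>_def)
    qed
    have "\<Phi> \<tau> = map_permutation {0..<n} Suc \<tau>"
      unfolding \<Phi>_def map_permutation_def restrict_id_def image_Suc_atLeastLessThan
      by (auto simp: fun_eq_iff)
    then have sg: "sign (\<Phi> \<tau>) = sign \<tau>"
      using sign_map_permutation[of Suc "{0..<n}" \<tau>] \<tau> by simp
    define Y where "Y = (\<lambda>k. x (Suc (\<tau> k)))"
    have "f (\<lambda>i. x (\<Phi> \<tau> i)) = (\<Prod>j<n. x (\<Phi> \<tau> (Suc j)) ^ j) *
        (\<Prod>j<n. \<Prod>i<j. v + (1 - u - v) * x (\<Phi> \<tau> (Suc i)) + u * x (\<Phi> \<tau> (Suc i)) * x (\<Phi> \<tau> (Suc j)))"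
      unfolding f_def pow_idx tri ..
    also have "\<dots> = (\<Prod>j<n. Y j ^ j) * (\<Prod>j<n. \<Prod>i<j. v + (1 - u - v) * Y i + u * Y i * Y j)"
      by (intro arg_cong2[where f="(*)"] prod.cong refl) (auto simp: phi Y_def)
    also have "\<dots> = (\<Prod>j<n. \<Prod>i<j. Y j * (v + (1 - u - v) * Y i + u * Y i * Y j))"
      by (rule prod_combine)
    also have "\<dots> = (\<Prod>j<n. \<Prod>i<j. v * x (Suc (\<tau> j)) - (x (Suc (\<tau> j)) * (-1 + u + v - u * x (Suc (\<tau> j)))) * x (Suc (\<tau> i)))"
      by (intro prod.cong refl) (simp add: Y_def algebra_simps)
    finally show "G (\<Phi> \<tau>) = signof \<tau> * (\<Prod>j<n. \<Prod>i<j. v * x (Suc (\<tau> j)) - (x (Suc (\<tau> j)) * (-1 + u + v - u * x (Suc (\<tau> j)))) * x (Suc (\<tau> i)))"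
      unfolding G_def sg by simp
  qed
  finally show ?thesis unfolding f_def .
qed


lemma pj_pp: "pj u v (Suc j) t = pp v (Suc j) (t * (-1 + u + v - u * t))"
  unfolding pj_def pp_def
  by (simp add: atLeast0AtMost lessThan_Suc_atMost[symmetric] power_mult_distrib mult.assoc)

theorem mainTheorem4:
  fixes n :: nat and u v :: "'a::field" and x :: "nat \<Rightarrow> 'a"
  assumes "n \<ge> 1" and "inj_on x {1..n}"
  shows "calA n u v x =
    det (mat n n (\<lambda>(i, j). x (i+1) ^ (n - (j+1)) * pj u v (j+1) (x (i+1))))
    / (\<Prod>i=1..n. \<Prod>j=i+1..n. (x i - x j))"
proof -
  define X where "X = (\<lambda>i. x (Suc i))"
  define A where "A = (\<lambda>i. X i * (-1 + u + v - u * X i))"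
  define D where "D = det (RM v n X A)"
  define s where "s = ((-1::'a)^(\<Sum>j<n. j))"
  define P where "P = (\<Prod>i=1..n. \<Prod>j=i+1..n. (x j - x i))"
  have L: "calA n u v x = D / P"
    unfolding calA_def ASym_conv D_def P_def main_LLg[symmetric] X_def A_def ..
  have "mat n n (\<lambda>(i, j). x (i+1) ^ (n - (j+1)) * pj u v (j+1) (x (i+1))) =
        mat n n (\<lambda>(i,j). RM v n X A $$ (i, revp n j))"
  proof (rule eq_matI)
    fix i j assume i: "i < dim_row (mat n n (\<lambda>(i,j). RM v n X A $$ (i, revp n j)))"
      and j: "j < dim_col (mat n n (\<lambda>(i,j). RM v n X A $$ (i, revp n j)))"
    then have i: "i < n" and j: "j < n" by auto
    have "n - (n - 1 - j) = Suc j" using j by simp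
    then show "mat n n (\<lambda>(i, j). x (i+1) ^ (n - (j+1)) * pj u v (j+1) (x (i+1))) $$ (i, j) =
       mat n n (\<lambda>(i,j). RM v n X A $$ (i, revp n j)) $$ (i, j)"
      using i j by (simp add: RM_def revp_def X_def A_def pj_pp)
  qed auto
  then have "det (mat n n (\<lambda>(i, j). x (i+1) ^ (n - (j+1)) * pj u v (j+1) (x (i+1)))) =
     det (mat n n (\<lambda>(i,j). RM v n X A $$ (i, revp n j)))" by simp
  also have "\<dots> = signof (revp n) * det (RM v n X A)"
    by (rule det_permute_cols) (auto simp: RM_def revp_permutes)
  also have "signof (revp n) = s" unfolding s_def by (rule sign_revp)
  finally have M: "det (mat n n (\<lambda>(i, j). x (i+1) ^ (n - (j+1)) * pj u v (j+1) (x (i+1)))) = s * D"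
    unfolding D_def .
  have Q: "(\<Prod>i=1..n. \<Prod>j=i+1..n. (x i - x j)) = s * P"
    unfolding s_def P_def by (rule sgn_tri)
  have s0: "s \<noteq> 0" unfolding s_def by simp
  show ?thesis unfolding L M Q using s0 by simp
qed

end
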